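(* Let $n$ be a positive integer, let $\mathcal F$ be an $\mathcal N$-saturated family of subsets of $[n]$, and let $\mathcal G$ be a component of $\mathcal F$ with minimal elements $B_1,\dots,B_l$ and maximal elements $A_1,\dots,A_k$. Let $M\in\mathcal F$ satisfy $\bigcup_{j=1}^l B_j\subseteq M\subseteq\bigcap_{j=1}^k A_j$ and be minimal (with respect to inclusion) among sets of $\mathcal F$ with this property. Suppose $i\in[n]$, $i\notin M$ and $M\cup\{i\}\notin\mathcal F$. If $M\cup\{i\}$ is a maximal element of some induced copy of $\mathcal N$ in $\mathcal F\cup\{M\cup\{i\}\}$, then there exists an induced copy of $\mathcal N$ in $\mathcal F\cup\{M\cup\{i\}\}$ in which $M\cup\{i\}$ is the maximal element comparable to both minimal elements and $M$ is one of the minimal elements. Moreover, the number of $i\in[n]\setminus M$ such that $M\cup\{i\}\notin\mathcal F$ and $M\cup\{i\}$ is a maximal element of some induced copy of $\mathcal N$ in $\mathcal F\cup\{M\cup\{i\}\}$ is at most $|\mathcal F|-2$.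
   Context: The poset $\mathcal N$ has four elements $a,b,c,d$ with $a<c$, $b<c$, $b<d$ and no other comparabilities (so $a,b$ are its minimal elements, $c,d$ its maximal elements; $c$ is the unique maximal element comparable to both minimal elements). A family $\mathcal Q$ of sets (ordered by inclusion) contains an induced copy of $\mathcal N$ if there are distinct sets in $\mathcal Q$ whose inclusion relations are exactly those of $a,b,c,d$ above. A family $\mathcal F$ of subsets of $[n]=\{1,\dots,n\}$ is $\mathcal N$-saturated if $\mathcal F$ contains no induced copy of $\mathcal N$, but for every $S\subseteq[n]$ with $S\notin\mathcal F$, the family $\mathcal F\cup\{S\}$ contains an induced copy of $\mathcal N$. A component of $\mathcal F$ is the vertex set of a connected component of the Hasse diagram (as a graph) of the poset $(\mathcal F\setminus\{\emptyset,[n]\},\subseteq)$; its minimal and maximal elements are taken with respect to inclusion within the component. *)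

theory Defs
  imports Main
begin

text \<open>Induced copy of the poset N (a<c, b<c, b<d, nothing else) in a family Q,
  with roles a b c d given explicitly.\<close>
definition is_N_copy :: "'a set set \<Rightarrow> 'a set \<Rightarrow> 'a set \<Rightarrow> 'a set \<Rightarrow> 'a set \<Rightarrow> bool" where
  "is_N_copy Q a b c d \<longleftrightarrow>
     a \<in> Q \<and> b \<in> Q \<and> c \<in> Q \<and> d \<in> Q \<and>
     a \<noteq> b \<and> a \<noteq> c \<and> a \<noteq> d \<and> b \<noteq> c \<and> b \<noteq> d \<and> c \<noteq> d \<and>
     a \<subseteq> c \<and> b \<subseteq> c \<and> b \<subseteq> d \<and>
     \<not> a \<subseteq> b \<and> \<not> b \<subseteq> a \<and> \<not> a \<subseteq> d \<and> \<not> d \<subseteq> a \<and>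
     \<not> c \<subseteq> d \<and> \<not> d \<subseteq> c \<and> \<not> c \<subseteq> a \<and> \<not> c \<subseteq> b \<and> \<not> d \<subseteq> b"

definition contains_N :: "'a set set \<Rightarrow> bool" where
  "contains_N Q \<longleftrightarrow> (\<exists>a b c d. is_N_copy Q a b c d)"

definition max_of_N_copy :: "'a set set \<Rightarrow> 'a set \<Rightarrow> bool" where
  "max_of_N_copy Q S \<longleftrightarrow> (\<exists>a b c d. is_N_copy Q a b c d \<and> (S = c \<or> S = d))"

definition N_saturated :: "nat \<Rightarrow> nat set set \<Rightarrow> bool" where
  "N_saturated n F \<longleftrightarrow>
     F \<subseteq> Pow {1..n} \<and> \<not> contains_N F \<and>
     (\<forall>S. S \<subseteq> {1..n} \<longrightarrow> S \<notin> F \<longrightarrow> contains_N (insert S F))"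

definition covers :: "'a set set \<Rightarrow> 'a set \<Rightarrow> 'a set \<Rightarrow> bool" where
  "covers P X Y \<longleftrightarrow> X \<in> P \<and> Y \<in> P \<and> X \<subset> Y \<and> \<not> (\<exists>Z\<in>P. X \<subset> Z \<and> Z \<subset> Y)"

definition hasse_conn :: "'a set set \<Rightarrow> 'a set \<Rightarrow> 'a set \<Rightarrow> bool" where
  "hasse_conn P = (\<lambda>X Y. covers P X Y \<or> covers P Y X)\<^sup>*\<^sup>*"

text \<open>G is a component of F: vertex set of a connected component of the Hasse diagram
  of F without the empty set and the ground set {1..n}.\<close>
definition is_component :: "nat \<Rightarrow> nat set set \<Rightarrow> nat set set \<Rightarrow> bool" where
  "is_component n F G \<longleftrightarrow>
     (\<exists>X \<in> F - {{}, {1..n}}. G = {Y \<in> F - {{}, {1..n}}. hasse_conn (F - {{}, {1..n}}) X Y})"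

definition minimal_elems :: "'a set set \<Rightarrow> 'a set set" where
  "minimal_elems G = {X \<in> G. \<not> (\<exists>Y\<in>G. Y \<subset> X)}"

definition maximal_elems :: "'a set set \<Rightarrow> 'a set set" where
  "maximal_elems G = {X \<in> G. \<not> (\<exists>Y\<in>G. X \<subset> Y)}"

end

theory Submission imports Defs begin

lemma hasse_sym: "hasse_conn P x y \<Longrightarrow> hasse_conn P y x"
proof -
  have e: "hasse_conn P = (symclp (covers P))\<^sup>*\<^sup>*"
    unfolding hasse_conn_def symclp_def by simp
  show "hasse_conn P x y \<Longrightarrow> hasse_conn P y x" unfolding e by (rule rtranclp_symclp_sym)
qed

lemma hasse_trans: "hasse_conn P x y \<Longrightarrow> hasse_conn P y z \<Longrightarrow> hasse_conn P x z"
  unfolding hasse_conn_def by (rule rtranclp_trans)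

lemma hasse_sub_aux:
  assumes "finite P"
  shows "\<And>x. card {w\<in>P. x \<subseteq> w \<and> w \<subseteq> y} = k \<Longrightarrow> x \<in> P \<Longrightarrow> y \<in> P \<Longrightarrow> x \<subseteq> y \<Longrightarrow> hasse_conn P x y"
proof (induction k arbitrary: rule: less_induct)
  case (less k x)
  show ?case
  proof (cases "x = y")
    case True then show ?thesis unfolding hasse_conn_def by simp
  next
    case False
    let ?A = "{w\<in>P. x \<subset> w \<and> w \<subseteq> y}"
    have fA: "finite ?A" using assms by simp
    have "y \<in> ?A" using less.prems False by auto
    then have "?A \<noteq> {}" by blast
    from finite_has_minimal[OF fA this] obtain z where z: "z \<in> ?A" and zmin: "\<forall>b\<in>?A. b \<le> z \<longrightarrow> z = b" by blast
    have cov: "covers P x z" unfolding covers_def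
    proof (intro conjI)
      show "\<not> (\<exists>Z\<in>P. x \<subset> Z \<and> Z \<subset> z)"
      proof
        assume "\<exists>Z\<in>P. x \<subset> Z \<and> Z \<subset> z"
        then obtain Z where "Z \<in> P" "x \<subset> Z" "Z \<subset> z" by blast
        then have "Z \<in> ?A" using z by auto
        then show False using zmin \<open>Z \<subset> z\<close> by auto
      qed
    qed (use z less.prems in auto)
    have sub: "{w\<in>P. z \<subseteq> w \<and> w \<subseteq> y} \<subset> {w\<in>P. x \<subseteq> w \<and> w \<subseteq> y}"
      using z less.prems by auto
    have "card {w\<in>P. z \<subseteq> w \<and> w \<subseteq> y} < k"
      using psubset_card_mono[OF _ sub] assms less.prems(1) by simp
    then have "hasse_conn P z y" using less.IH[OF _ refl] z less.prems by auto
    moreover have "hasse_conn P x z" unfolding hasse_conn_def using cov by auto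
    ultimately show ?thesis using hasse_trans by blast
  qed
qed

lemma hasse_sub: "finite P \<Longrightarrow> x \<in> P \<Longrightarrow> y \<in> P \<Longrightarrow> x \<subseteq> y \<Longrightarrow> hasse_conn P x y"
  using hasse_sub_aux by blast

lemma comp_closed:
  assumes "finite F" "is_component n F G" "y \<in> G" "z \<in> F - {{}, {1..n}}" "y \<subseteq> z \<or> z \<subseteq> y"
  shows "z \<in> G"
proof -
  let ?P = "F - {{}, {1..n}}"
  obtain X where X: "X \<in> ?P" "G = {Y \<in> ?P. hasse_conn ?P X Y}" using assms(2) unfolding is_component_def by blast
  have fP: "finite ?P" using assms(1) by simp
  have "hasse_conn ?P y z" using assms(5)
  proof
    assume "y \<subseteq> z" then show ?thesis using hasse_sub[OF fP] assms X by auto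
  next
    assume "z \<subseteq> y" then show ?thesis using hasse_sub[OF fP] assms X hasse_sym by blast
  qed
  then show ?thesis using X assms(3,4) hasse_trans by blast
qed

lemma comp_basic:
  assumes "is_component n F G"
  shows "G \<subseteq> F - {{}, {1..n}}" "G \<noteq> {}"
  using assms unfolding is_component_def hasse_conn_def by auto

lemma has_min:
  assumes "finite G" "g \<in> G"
  shows "\<exists>B\<in>minimal_elems G. B \<subseteq> g"
proof -
  from finite_has_minimal2[OF assms] obtain m where "m \<in> G" "m \<subseteq> g" "\<forall>b\<in>G. b \<subseteq> m \<longrightarrow> m = b" by auto
  then show ?thesis unfolding minimal_elems_def by auto
qed

lemma empty_in:
  assumes "N_saturated n F" shows "{} \<in> F"
proof (rule ccontr)
  assume "{} \<notin> F"
  then have "contains_N (insert {} F)" using assms unfolding N_saturated_def by auto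
  then obtain a b c d where q: "is_N_copy (insert {} F) a b c d" unfolding contains_N_def by blast
  have "\<not> is_N_copy F a b c d" using assms unfolding N_saturated_def contains_N_def by blast
  then have "a = {} \<or> b = {} \<or> c = {} \<or> d = {}" using q unfolding is_N_copy_def by auto
  then show False using q unfolding is_N_copy_def by auto
qed


lemma setup_facts:
  assumes sat: "N_saturated n F" and comp: "is_component n F G"
  shows "F \<subseteq> Pow {1..n}" "finite F" "\<And>a b c d. \<not> is_N_copy F a b c d" "G \<subseteq> F - {{}, {1..n}}" "finite G"
    "G \<noteq> {}"
    "\<And>B. B \<in> minimal_elems G \<Longrightarrow> B \<in> G \<and> (\<forall>Y\<in>G. Y \<subseteq> B \<longrightarrow> Y = B)"
proof -
  show FP: "F \<subseteq> Pow {1..n}" using sat unfolding N_saturated_def by auto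
  then show fF: "finite F" using finite_subset by blast
  show "\<And>a b c d. \<not> is_N_copy F a b c d" using sat unfolding N_saturated_def contains_N_def by auto
  show GP: "G \<subseteq> F - {{}, {1..n}}" "G \<noteq> {}" using comp_basic[OF comp] by auto
  then show "finite G" using fF finite_subset by blast
  show "\<And>B. B \<in> minimal_elems G \<Longrightarrow> B \<in> G \<and> (\<forall>Y\<in>G. Y \<subseteq> B \<longrightarrow> Y = B)"
    unfolding minimal_elems_def by auto
qed

lemma M_in_G:
  assumes sat: "N_saturated n F" and comp: "is_component n F G" and MF: "M \<in> F"
    and U: "\<Union>(minimal_elems G) \<subseteq> M" and Mn: "M \<noteq> {1..n}"
  shows "M \<in> G"
proof -
  note f = setup_facts[OF sat comp]
  obtain g where "g \<in> G" using f(6) by blast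
  then obtain B where B: "B \<in> minimal_elems G" "B \<subseteq> g" using has_min[OF f(5)] by blast
  have BG: "B \<in> G" using f(7)[OF B(1)] by blast
  have "B \<subseteq> M" using U B by blast
  moreover have "B \<noteq> {}" using BG f(4) by blast
  ultimately have "M \<in> F - {{}, {1..n}}" using MF Mn by auto
  then show ?thesis using comp_closed[OF f(2) comp BG] \<open>B \<subseteq> M\<close> by blast
qed

lemma L2:
  assumes sat: "N_saturated n F" and comp: "is_component n F G" and MF: "M \<in> F"
    and U: "\<Union>(minimal_elems G) \<subseteq> M" and I: "M \<subseteq> \<Inter>(maximal_elems G)"
    and mn: "\<forall>M'\<in>F. \<Union>(minimal_elems G) \<subseteq> M' \<and> M' \<subseteq> \<Inter>(maximal_elems G) \<longrightarrow> \<not> M' \<subset> M"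
    and Mn: "M \<noteq> {1..n}"
    and zG: "z \<in> G" and z1: "\<not> z \<subseteq> M" and z2: "\<not> M \<subseteq> z"
  shows False
proof -
  note f = setup_facts[OF sat comp]
  have MG: "M \<in> G" using M_in_G[OF sat comp MF U Mn] .
  have L1: False if wG: "w \<in> G" and wM: "w \<subset> M" and gG: "g \<in> G" and g1: "\<not> g \<subseteq> M" and g2: "\<not> M \<subseteq> g"
    and wg1: "\<not> w \<subseteq> g" and wg2: "\<not> g \<subseteq> w" for w g
  proof -
    have wF: "w \<in> F" using wG f(4) by blast
    have "\<not> (\<Union>(minimal_elems G) \<subseteq> w)" using mn wF I wM by blast
    then obtain B0 where B0: "B0 \<in> minimal_elems G" "\<not> B0 \<subseteq> w" by blast
    have B0p: "B0 \<in> G" "\<forall>Y\<in>G. Y \<subseteq> B0 \<longrightarrow> Y = B0" "B0 \<subseteq> M" using f(7)[OF B0(1)] U B0(1) by auto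
    show False
    proof (cases "\<exists>B1\<in>minimal_elems G. B1 \<subseteq> g \<and> \<not> B1 \<subseteq> w")
      case True
      then obtain B1 where B1: "B1 \<in> minimal_elems G" "B1 \<subseteq> g" "\<not> B1 \<subseteq> w" by blast
      have B1p: "B1 \<in> G" "\<forall>Y\<in>G. Y \<subseteq> B1 \<longrightarrow> Y = B1" "B1 \<subseteq> M" using f(7)[OF B1(1)] U B1(1) by auto
      have gF: "g \<in> F" "B1 \<in> F" using gG B1p f(4) by auto
      have n1: "\<not> w \<subseteq> B1" using B1p(2) wG B1(3) by blast
      have n2: "\<not> M \<subseteq> B1" using B1(2) g2 by blast
      have n3: "\<not> g \<subseteq> B1" using B1p(3) g1 by blast
      have n4: "\<not> M \<subseteq> w" using wM by blast
      have "is_N_copy F w B1 M g" unfolding is_N_copy_def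
        using wF gF MF B1p(3) B1(2,3) wM g1 g2 wg1 wg2 n1 n2 n3 n4 by auto
      then show False using f(3) by blast
    next
      case False
      obtain B1 where B1: "B1 \<in> minimal_elems G" "B1 \<subseteq> g" using has_min[OF f(5) gG] by blast
      have B1w: "B1 \<subseteq> w" using False B1 by blast
      have B1p: "B1 \<in> G" "\<forall>Y\<in>G. Y \<subseteq> B1 \<longrightarrow> Y = B1" "B1 \<subseteq> M" using f(7)[OF B1(1)] U B1(1) by auto
      have B0g: "\<not> B0 \<subseteq> g" using False B0 by blast
      have gF: "g \<in> F" "B1 \<in> F" "B0 \<in> F" using gG B1p B0p f(4) by auto
      have n1: "\<not> B0 \<subseteq> B1" using B1w B0(2) by blast
      have n2: "\<not> B1 \<subseteq> B0" using B0p(2) B1p(1) B1w B0(2) by blast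
      have n3: "\<not> g \<subseteq> B0" using B0p(3) g1 by blast
      have n4: "\<not> M \<subseteq> B0" using n2 B1p(3) by blast
      have n5: "\<not> M \<subseteq> B1" using B1w wM by blast
      have n6: "\<not> g \<subseteq> B1" using B1p(3) g1 by blast
      have "is_N_copy F B0 B1 M g" unfolding is_N_copy_def
        using gF MF B0p(3) B1p(3) B1(2) g1 g2 B0g n1 n2 n3 n4 n5 n6 by auto
      then show False using f(3) by blast
    qed
  qed
  have FP: "F \<subseteq> Pow {1..n}" using f(1) .
  have notmin: "\<exists>g\<in>G. g \<subset> M"
  proof (rule ccontr)
    assume nm: "\<not> (\<exists>g\<in>G. g \<subset> M)"
    obtain Bz where Bz: "Bz \<in> minimal_elems G" "Bz \<subseteq> z" using has_min[OF f(5) zG] by blast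
    have "Bz \<in> G" "Bz \<subseteq> M" using f(7)[OF Bz(1)] U Bz(1) by auto
    then have "Bz = M" using nm by blast
    then show False using Bz(2) z2 by blast
  qed
  define D where "D = {g\<in>G. g \<subset> M}"
  define T where "T = \<Union>D"
  have DG: "D \<subseteq> G" and TM: "T \<subseteq> M" and DT: "\<forall>w\<in>D. w \<subseteq> T" unfolding D_def T_def by auto
  obtain w0 where w0: "w0 \<in> D" using notmin unfolding D_def by blast
  have w0ne: "w0 \<noteq> {}" using w0 DG f(4) by blast
  have UT: "\<Union>(minimal_elems G) \<subseteq> T"
  proof
    fix x assume "x \<in> \<Union>(minimal_elems G)"
    then obtain B where B: "B \<in> minimal_elems G" "x \<in> B" by blast
    have Bp: "B \<in> G" "\<forall>Y\<in>G. Y \<subseteq> B \<longrightarrow> Y = B" "B \<subseteq> M" using f(7)[OF B(1)] U B(1) by auto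
    have "B \<noteq> M" using Bp notmin by blast
    then have "B \<in> D" unfolding D_def using Bp by auto
    then show "x \<in> T" using B(2) DT by blast
  qed
  have D1: "g \<subseteq> T \<or> T \<subseteq> g" if gG: "g \<in> G" for g
  proof (cases "g \<in> D")
    case True then show ?thesis using DT by blast
  next
    case False
    have "w \<subseteq> g" if wD: "w \<in> D" for w
    proof (rule ccontr)
      assume wg: "\<not> w \<subseteq> g"
      have wG: "w \<in> G" and wM: "w \<subset> M" using wD unfolding D_def by auto
      have gw: "\<not> g \<subseteq> w" using False wM gG unfolding D_def by auto
      show False
      proof (cases "g \<subseteq> M")
        case True
        then have "g = M" using False gG unfolding D_def by auto
        then show False using wM wg by blast
      next
        case gM: False
        show False
        proof (cases "M \<subseteq> g")
          case True then show False using wM wg by blast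
        next
          case False
          show False using L1[OF wG wM gG gM False wg gw] .
        qed
      qed
    qed
    then show ?thesis unfolding T_def by blast
  qed
  have TI: "T \<subseteq> \<Inter>(maximal_elems G)" using TM I by blast
  have TnF: "T \<notin> F"
  proof
    assume "T \<in> F"
    then have "\<not> T \<subset> M" using mn UT TI by blast
    then have TeM: "T = M" using TM by blast
    have "z \<notin> D" using z1 unfolding D_def by auto
    from D1[OF zG] show False using TeM z1 z2 by blast
  qed
  have Tn: "T \<subseteq> {1..n}" using TM MF FP by blast
  have Mn2: "M \<subseteq> {1..n}" using MF FP by blast
  have below: "y \<in> G" if "y \<in> F" "y \<subseteq> T" "y \<noteq> {}" for y
  proof -
    have "y \<noteq> {1..n}" using that TM Mn Mn2 by blast
    then show ?thesis using comp_closed[OF f(2) comp MG] that TM by blast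
  qed
  have above: "y = {1..n} \<or> y \<in> G" if "y \<in> F" "T \<subseteq> y" for y
  proof -
    have "w0 \<subseteq> y" using that w0 DT by blast
    then have "y \<noteq> {}" using w0ne by blast
    then show ?thesis using comp_closed[OF f(2) comp, of w0 y] w0 DG that \<open>w0 \<subseteq> y\<close> by blast
  qed
  have GnN: "y \<noteq> {1..n}" "y \<noteq> {}" "y \<subseteq> {1..n}" if "y \<in> G" for y using that f(4) FP by auto
  have cc: "y' \<in> G" if "y \<in> G" "y' \<in> F" "y' \<noteq> {}" "y' \<noteq> {1..n}" "y \<subseteq> y' \<or> y' \<subseteq> y" for y y'
    using comp_closed[OF f(2) comp] that by blast
  have "contains_N (insert T F)" using sat TnF Tn unfolding N_saturated_def by blast
  then obtain a b c d where q: "is_N_copy (insert T F) a b c d" unfolding contains_N_def by blast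
  have qq: "a \<in> insert T F" "b \<in> insert T F" "c \<in> insert T F" "d \<in> insert T F"
    "a \<noteq> b" "a \<noteq> c" "a \<noteq> d" "b \<noteq> c" "b \<noteq> d" "c \<noteq> d"
    "a \<subseteq> c" "b \<subseteq> c" "b \<subseteq> d"
    "\<not> a \<subseteq> b" "\<not> b \<subseteq> a" "\<not> a \<subseteq> d" "\<not> d \<subseteq> a"
    "\<not> c \<subseteq> d" "\<not> d \<subseteq> c" "\<not> c \<subseteq> a" "\<not> c \<subseteq> b" "\<not> d \<subseteq> b"
    using q unfolding is_N_copy_def by simp_all
  have "\<not> (a \<in> F \<and> b \<in> F \<and> c \<in> F \<and> d \<in> F)"
  proof
    assume "a \<in> F \<and> b \<in> F \<and> c \<in> F \<and> d \<in> F"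
    then have "is_N_copy F a b c d" using qq(5-22) unfolding is_N_copy_def by simp
    then show False using f(3) by blast
  qed
  then have "a = T \<or> b = T \<or> c = T \<or> d = T" using qq(1-4) by auto
  then show False
  proof (elim disjE)
    assume aT: "a = T"
    have F: "b \<in> F" "c \<in> F" "d \<in> F" using qq aT by auto
    have "c \<noteq> {1..n}" using F FP qq(19) by blast
    then have cG: "c \<in> G" using above[OF F(2)] qq(11) aT by blast
    have "b \<noteq> {}" using qq(15) by blast
    moreover have "b \<noteq> {1..n}" using GnN[OF cG] qq(12) by blast
    ultimately have "b \<in> G" using cc[OF cG F(1)] qq(12) by blast
    then show False using D1 qq(14,15) aT by blast
  next
    assume bT: "b = T"
    have F: "a \<in> F" "c \<in> F" "d \<in> F" using qq bT by auto
    have "c \<noteq> {1..n}" using F FP qq(19) by blast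
    then have cG: "c \<in> G" using above[OF F(2)] qq(12) bT by blast
    have "a \<noteq> {}" using qq(14) by blast
    moreover have "a \<noteq> {1..n}" using GnN[OF cG] qq(11) by blast
    ultimately have "a \<in> G" using cc[OF cG F(1)] qq(11) by blast
    then show False using D1 qq(14,15) bT by blast
  next
    assume cT: "c = T"
    have F: "a \<in> F" "b \<in> F" "d \<in> F" using qq cT by auto
    have "b \<noteq> {}" using qq(15) by blast
    then have bG: "b \<in> G" using below[OF F(2)] qq(12) cT by blast
    have "d \<noteq> {}" using qq(13) \<open>b \<noteq> {}\<close> by blast
    moreover have "d \<noteq> {1..n}" using qq(18) Tn cT by blast
    ultimately have "d \<in> G" using cc[OF bG F(3)] qq(13) by blast
    then show False using D1 qq(18,19) cT by blast
  next
    assume dT: "d = T"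
    have F: "a \<in> F" "b \<in> F" "c \<in> F" using qq dT by auto
    have "b \<noteq> {}" using qq(15) by blast
    then have bG: "b \<in> G" using below[OF F(2)] qq(13) dT by blast
    have "c \<noteq> {}" using qq(12) \<open>b \<noteq> {}\<close> by blast
    moreover have "c \<noteq> {1..n}" using qq(19) Tn dT by blast
    ultimately have "c \<in> G" using cc[OF bG F(3)] qq(12) by blast
    then show False using D1 qq(18,19) dT by blast
  qed
qed


lemma part1:
  fixes n :: nat and F G :: "nat set set" and M :: "nat set"
  assumes sat: "N_saturated n F"
    and comp: "is_component n F G"
    and MF: "M \<in> F"
    and U: "\<Union>(minimal_elems G) \<subseteq> M" and I: "M \<subseteq> \<Inter>(maximal_elems G)"
    and mn: "\<forall>M'\<in>F. \<Union>(minimal_elems G) \<subseteq> M' \<and> M' \<subseteq> \<Inter>(maximal_elems G) \<longrightarrow> \<not> M' \<subset> M"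
    and iN: "i \<in> {1..n}" and iM: "i \<notin> M" and SF: "insert i M \<notin> F"
    and mx: "max_of_N_copy (insert (insert i M) F) (insert i M)"
  shows "\<exists>x y. is_N_copy (insert (insert i M) F) M x (insert i M) y \<or>
                   is_N_copy (insert (insert i M) F) x M (insert i M) y"
proof -
  define S where "S = insert i M"
  define Q where "Q = insert S F"
  note f = setup_facts[OF sat comp]
  have FP: "F \<subseteq> Pow {1..n}" using f(1) .
  have Mn2: "M \<subseteq> {1..n}" using MF FP by blast
  have Mn: "M \<noteq> {1..n}" using iN iM by blast
  have Sn: "S \<subseteq> {1..n}" using Mn2 iN unfolding S_def by blast
  have MG: "M \<in> G" using M_in_G[OF sat comp MF U Mn] .
  have L2': False if "z \<in> G" "\<not> z \<subseteq> M" "\<not> M \<subseteq> z" for z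
    using L2[OF sat comp MF U I mn Mn that] .
  have cc: "y' \<in> G" if "y \<in> G" "y' \<in> F" "y' \<noteq> {}" "y' \<noteq> {1..n}" "y \<subseteq> y' \<or> y' \<subseteq> y" for y y'
    using comp_closed[OF f(2) comp] that by blast
  have GnN: "y \<noteq> {1..n}" "y \<noteq> {}" "y \<subseteq> {1..n}" if "y \<in> G" for y using that f(4) FP by auto
  have subS: "y \<subseteq> M" if "y \<subseteq> S" "i \<notin> y" for y using that unfolding S_def by blast
  have SnF: "S \<notin> F" using SF unfolding S_def .
  have MS: "M \<subseteq> S" "i \<in> S" "i \<notin> M" "M \<noteq> S" using iM unfolding S_def by auto
  have eqS: "y = S" if "M \<subseteq> y" "y \<subseteq> S" "i \<in> y" for y using that unfolding S_def by blast
  obtain a b c d where q: "is_N_copy Q a b c d" and Scd: "S = c \<or> S = d"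
    using mx unfolding max_of_N_copy_def Q_def S_def by blast
  have qq: "a \<in> Q" "b \<in> Q" "c \<in> Q" "d \<in> Q"
    "a \<noteq> b" "a \<noteq> c" "a \<noteq> d" "b \<noteq> c" "b \<noteq> d" "c \<noteq> d"
    "a \<subseteq> c" "b \<subseteq> c" "b \<subseteq> d"
    "\<not> a \<subseteq> b" "\<not> b \<subseteq> a" "\<not> a \<subseteq> d" "\<not> d \<subseteq> a"
    "\<not> c \<subseteq> d" "\<not> d \<subseteq> c" "\<not> c \<subseteq> a" "\<not> c \<subseteq> b" "\<not> d \<subseteq> b"
    using q unfolding is_N_copy_def by simp_all
  have MQ: "M \<in> Q" "S \<in> Q" unfolding Q_def using MF by auto
  have "\<exists>x y. is_N_copy Q M x S y \<or> is_N_copy Q x M S y"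
    using Scd
  proof
    assume cS: "S = c"
    have F: "a \<in> F" "b \<in> F" "d \<in> F" using qq(1-4,6,8,10) cS Q_def by auto
    show ?thesis
    proof (cases "i \<in> b")
      case True
      have n1: "\<not> M \<subseteq> b" using eqS[of b] True qq(8,12) cS by blast
      have n2: "\<not> M \<subseteq> d" using True qq(13,18) cS MS unfolding S_def by blast
      have "is_N_copy Q M b S d" unfolding is_N_copy_def
        using MQ qq(2,4,8,10,12,13,18,19) cS n1 n2 True MS by blast
      then show ?thesis by blast
    next
      case False
      have bM: "b \<subseteq> M" using subS[of b] False qq(12) cS by blast
      show ?thesis
      proof (cases "M \<subseteq> d")
        case True
        have id: "i \<notin> d" using True qq(18) cS unfolding S_def by blast
        have ia: "i \<in> a" using subS[of a] qq(11,16) cS True by blast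
        have n1: "\<not> M \<subseteq> a" using eqS[of a] ia qq(6,11) cS by blast
        have n2: "\<not> d \<subseteq> S" using qq(19) cS by blast
        have "is_N_copy Q a M S d" unfolding is_N_copy_def
          using MQ qq(1,4,6,10,11,18) cS n1 n2 True ia id MS by blast
        then show ?thesis by blast
      next
        case Md: False
        have "b \<noteq> {}" using qq(15) by blast
        moreover have "b \<noteq> {1..n}" using bM Mn Mn2 by blast
        ultimately have bG: "b \<in> G" using cc[OF MG F(2)] bM by blast
        have "d \<noteq> {}" using qq(13) \<open>b \<noteq> {}\<close> by blast
        moreover have "d \<noteq> {1..n}" using qq(18) Sn cS by blast
        ultimately have dG: "d \<in> G" using cc[OF bG F(3)] qq(13) by blast
        have "\<not> d \<subseteq> M" using qq(19) cS MS(1) by blast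
        then show ?thesis using L2'[OF dG _ Md] by blast
      qed
    qed
  next
    assume dS: "S = d"
    have F: "a \<in> F" "b \<in> F" "c \<in> F" using qq(1-4,7,9,10) dS Q_def by auto
    show ?thesis
    proof (cases "i \<in> b")
      case True
      have n1: "\<not> M \<subseteq> b" using eqS[of b] True qq(9,13) dS by blast
      have n2: "\<not> M \<subseteq> c" using True qq(12,19) dS MS unfolding S_def by blast
      have "is_N_copy Q M b S c" unfolding is_N_copy_def
        using MQ qq(2,3,9,10,12,13,18,19) dS n1 n2 True MS by blast
      then show ?thesis by blast
    next
      case False
      have bM: "b \<subseteq> M" using subS[of b] False qq(13) dS by blast
      have "b \<noteq> {}" using qq(15) by blast
      moreover have "b \<noteq> {1..n}" using bM Mn Mn2 by blast
      ultimately have bG: "b \<in> G" using cc[OF MG F(2)] bM by blast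
      have "c \<noteq> {}" using qq(12) \<open>b \<noteq> {}\<close> by blast
      moreover have "c \<noteq> {1..n}" using qq(19) Sn dS by blast
      ultimately have cG: "c \<in> G" using cc[OF bG F(3)] qq(12) by blast
      have "a \<noteq> {}" using qq(14) by blast
      moreover have "a \<noteq> {1..n}" using GnN[OF cG] qq(11) by blast
      ultimately have aG: "a \<in> G" using cc[OF cG F(1)] qq(11) by blast
      have "\<not> a \<subseteq> M" using qq(16) dS MS(1) by blast
      moreover have "\<not> M \<subseteq> a" using bM qq(15) by blast
      ultimately show ?thesis using L2'[OF aG] by blast
    qed
  qed
  then show ?thesis unfolding Q_def S_def .
qed


theorem lemma3p3:
  fixes n :: nat and F G :: "nat set set" and M :: "nat set"
  assumes "n \<ge> 1"
    and "N_saturated n F"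
    and "is_component n F G"
    and "M \<in> F"
    and "\<Union>(minimal_elems G) \<subseteq> M" and "M \<subseteq> \<Inter>(maximal_elems G)"
    and "\<forall>M'\<in>F. \<Union>(minimal_elems G) \<subseteq> M' \<and> M' \<subseteq> \<Inter>(maximal_elems G) \<longrightarrow> \<not> M' \<subset> M"
  shows "(\<forall>i \<in> {1..n}. i \<notin> M \<longrightarrow> insert i M \<notin> F \<longrightarrow>
            max_of_N_copy (insert (insert i M) F) (insert i M) \<longrightarrow>
            (\<exists>x y. is_N_copy (insert (insert i M) F) M x (insert i M) y \<or>
                   is_N_copy (insert (insert i M) F) x M (insert i M) y))
       \<and> int (card {i \<in> {1..n} - M. insert i M \<notin> F \<and>
                     max_of_N_copy (insert (insert i M) F) (insert i M)})
           \<le> int (card F) - 2"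
proof -
  have P1: "\<forall>i \<in> {1..n}. i \<notin> M \<longrightarrow> insert i M \<notin> F \<longrightarrow>
            max_of_N_copy (insert (insert i M) F) (insert i M) \<longrightarrow>
            (\<exists>x y. is_N_copy (insert (insert i M) F) M x (insert i M) y \<or>
                   is_N_copy (insert (insert i M) F) x M (insert i M) y)"
    using part1[OF assms(2-7)] by blast
  define II where "II = {i \<in> {1..n} - M. insert i M \<notin> F \<and>
                     max_of_N_copy (insert (insert i M) F) (insert i M)}"
  define xf where "xf = (\<lambda>i. SOME x. \<exists>y. is_N_copy (insert (insert i M) F) M x (insert i M) y \<or>
                   is_N_copy (insert (insert i M) F) x M (insert i M) y)"
  have xp: "xf i \<in> F \<and> xf i \<subseteq> insert i M \<and> i \<in> xf i" if "i \<in> II" for i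
  proof -
    have "\<exists>x y. is_N_copy (insert (insert i M) F) M x (insert i M) y \<or>
                   is_N_copy (insert (insert i M) F) x M (insert i M) y"
      using P1 that unfolding II_def by blast
    then have "\<exists>y. is_N_copy (insert (insert i M) F) M (xf i) (insert i M) y \<or>
                   is_N_copy (insert (insert i M) F) (xf i) M (insert i M) y"
      unfolding xf_def by (rule someI_ex)
    then show ?thesis unfolding is_N_copy_def by blast
  qed
  note f = setup_facts[OF assms(2,3)]
  have inj: "inj_on xf II"
  proof (rule inj_onI)
    fix i j assume "i \<in> II" "j \<in> II" "xf i = xf j"
    then show "i = j" using xp[of i] xp[of j] unfolding II_def by auto
  qed
  have E: "{} \<in> F" using empty_in[OF assms(2)] .
  have Mn: "M \<noteq> {}"
  proof
    assume "M = {}"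
    obtain g where "g \<in> G" using f(6) by blast
    then obtain B where B: "B \<in> minimal_elems G" "B \<subseteq> g" using has_min[OF f(5)] by blast
    have BG: "B \<in> G" using f(7)[OF B(1)] by blast
    have "B \<subseteq> M" using assms(5) B by blast
    moreover have "B \<noteq> {}" using BG f(4) by blast
    ultimately show False using \<open>M = {}\<close> by blast
  qed
  have img: "xf ` II \<subseteq> F - {{}, M}" using xp unfolding II_def by auto
  have "card II = card (xf ` II)" using card_image[OF inj] by simp
  also have "\<dots> \<le> card (F - {{}, M})" using card_mono[OF _ img] f(2) by simp
  also have "\<dots> = card F - 2" using E assms(4) Mn f(2) by (simp add: card_Diff_subset)
  finally have "card II \<le> card F - 2" .
  moreover have "card F \<ge> 2"
  proof -
    have "{{}, M} \<subseteq> F" using E assms(4) by blast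
    then have "card {{}, M} \<le> card F" using card_mono f(2) by blast
    then show ?thesis using Mn by simp
  qed
  ultimately have "int (card II) \<le> int (card F) - 2" by linarith
  then show ?thesis using P1 unfolding II_def by blast
qed

end
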